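(* Let $a,b:[0,\infty)\to\mathbb C$ be bounded Lebesgue measurable functions, neither of which vanishes almost everywhere, such that $a$ vanishes almost everywhere outside some bounded interval and $$ t\,a(t)=\int_0^t a(u)\,b(t-u)\,du\quad\text{for almost every } t>0.$$ Then $b$ is not compactly supported up to null sets, i.e. there is no $T>0$ such that $b(t)=0$ for almost every $t>T$. *)

theory Defs
  imports "HOL-Analysis.Analysis"
begin

end

theory Submission
  imports Defs "HOL-Complex_Analysis.Complex_Analysis" "HOL-Probability.Probability"
begin

definition good :: "real \<Rightarrow> (real \<Rightarrow> complex) \<Rightarrow> bool" where
  "good R f \<longleftrightarrow> 0 \<le> R \<and> f \<in> borel_measurable borel \<and> (\<exists>K. \<forall>t. norm (f t) \<le> K) \<and> (\<forall>t. t \<notin> {0..R} \<longrightarrow> f t = 0)"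

definition Lap :: "(real \<Rightarrow> complex) \<Rightarrow> complex \<Rightarrow> complex" where
  "Lap f z = (\<integral>t. f t * exp (z * of_real t) \<partial>lborel)"

definition mom :: "(real \<Rightarrow> complex) \<Rightarrow> nat \<Rightarrow> complex" where
  "mom f n = (\<integral>t. f t * of_real t ^ n \<partial>lborel)"

lemma good_integrable:
  assumes "good R f" and gm: "g \<in> borel_measurable borel" and gc: "continuous_on {0..R} g"
  shows "integrable lborel (\<lambda>t. f t * g t)"
proof -
  from assms obtain K where K: "\<And>t. norm (f t) \<le> K" and fm: "f \<in> borel_measurable borel"
    and fz: "\<And>t. t \<notin> {0..R} \<Longrightarrow> f t = 0" using assms(1) unfolding good_def by auto
  obtain B where B: "\<forall>t\<in>{0..R}. norm (g t) \<le> B"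
    using compact_imp_bounded[OF compact_continuous_image[OF gc compact_Icc]]
    unfolding bounded_iff by (auto simp: image_iff)
  have int: "integrable lborel (\<lambda>t. indicator {0..R} t * (K * B))"
    by (intro integrable_mult_left integrable_real_indicator) (simp_all add: emeasure_lborel_Icc_eq)
  show ?thesis
  proof (rule Bochner_Integration.integrable_bound[OF int])
    show "(\<lambda>t. f t * g t) \<in> borel_measurable lborel" using fm gm by measurable
    show "AE t in lborel. norm (f t * g t) \<le> norm (indicator {0..R} t * (K * B))"
    proof (intro AE_I2)
      fix t show "norm (f t * g t) \<le> norm (indicator {0..R} t * (K * B) :: real)"
      proof (cases "t \<in> {0..R}")
        case True
        have K0: "0 \<le> K" using norm_ge_zero[of "f 0"] K[of 0] by linarith
        have "norm (f t * g t) \<le> K * B" unfolding norm_mult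
          by (intro mult_mono K B[rule_format, OF True] K0 norm_ge_zero)
        also have "\<dots> \<le> norm (indicator {0..R} t * (K * B) :: real)" using True by simp
        finally show ?thesis .
      qed (simp add: fz)
    qed
  qed
qed

lemma goodD:
  assumes "good R f"
  obtains K where "\<And>t. norm (f t) \<le> K" "0 \<le> K" "f \<in> borel_measurable borel"
    "\<And>t. t \<notin> {0..R} \<Longrightarrow> f t = 0"
proof -
  from assms obtain K where K: "\<And>t. norm (f t) \<le> K" and fm: "f \<in> borel_measurable borel"
    and fz: "\<And>t. t \<notin> {0..R} \<Longrightarrow> f t = 0" unfolding good_def by auto
  have K0: "0 \<le> K" using norm_ge_zero[of "f 0"] K[of 0] by linarith
  show ?thesis using that K K0 fm fz by blast
qed

lemma good_mult_t: "good R f \<Longrightarrow> good R (\<lambda>t. of_real t * f t)"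
proof -
  assume g: "good R f"
  then obtain K where K: "\<And>t. norm (f t) \<le> K" "0 \<le> K" "f \<in> borel_measurable borel"
    "\<And>t. t \<notin> {0..R} \<Longrightarrow> f t = 0" using goodD[OF g] by blast
  have "norm (of_real t * f t) \<le> \<bar>R\<bar> * K" for t
  proof (cases "t \<in> {0..R}")
    case True
    then show ?thesis unfolding norm_mult by (intro mult_mono K) auto
  qed (simp add: K mult_nonneg_nonneg)
  then show ?thesis unfolding good_def using K g[unfolded good_def] by (auto intro!: borel_measurable_times)
qed

lemma Lap_sums:
  assumes g: "good R f"
  shows "(\<lambda>n. mom f n * z ^ n / fact n) sums Lap f z"
proof -
  obtain K where K: "\<And>t. norm (f t) \<le> K" "0 \<le> K" and fm[measurable]: "f \<in> borel_measurable borel"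
    and fz: "\<And>t. t \<notin> {0..R} \<Longrightarrow> f t = 0" using goodD[OF g] by blast
  define F where "F i t = f t * ((z * of_real t) ^ i / fact i)" for i t
  have intF: "integrable lborel (F i)" for i
    unfolding F_def by (rule good_integrable[OF g]) (auto intro!: continuous_intros)
  have sumt: "(\<lambda>i. F i t) sums (f t * exp (z * of_real t))" for t
    unfolding F_def
    using sums_mult[OF exp_converges[of "z * of_real t"], of "f t"]
    by (simp add: scaleR_conv_of_real divide_inverse mult_ac)
  have nF: "norm (F i t) = norm (f t) * (norm (z * of_real t) ^ i / fact i)" for i t
    unfolding F_def by (simp add: norm_mult norm_divide norm_power)
  have sumn: "summable (\<lambda>i. norm (F i t))" for t
    unfolding nF
    using sums_mult[OF exp_converges[of "norm (z * of_real t)"], of "norm (f t)"]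
    by (auto simp: sums_iff scaleR_conv_of_real divide_inverse mult_ac)
  have bnd: "(\<integral>t. norm (F i t) \<partial>lborel) \<le> R * K * ((norm z * R) ^ i / fact i)" for i
  proof -
    have "(\<integral>t. norm (F i t) \<partial>lborel) \<le> (\<integral>t. indicator {0..R} t * (K * ((norm z * R) ^ i / fact i)) \<partial>lborel)"
    proof (rule integral_mono)
      show "integrable lborel (\<lambda>t. norm (F i t))" using intF by auto
      show "integrable lborel (\<lambda>t. indicator {0..R} t * (K * ((norm z * R) ^ i / fact i)) :: real)"
        by (intro integrable_mult_left integrable_real_indicator) (simp_all add: emeasure_lborel_Icc_eq)
      fix t show "norm (F i t) \<le> indicator {0..R} t * (K * ((norm z * R) ^ i / fact i))"
      proof (cases "t \<in> {0..R}")
        case True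
        have "norm (z * of_real t) ^ i \<le> (norm z * R) ^ i"
          using True by (intro power_mono) (auto simp: norm_mult intro!: mult_left_mono)
        then have h: "norm (z * of_real t) ^ i / fact i \<le> (norm z * R) ^ i / fact i"
          by (intro divide_right_mono) auto
        have "norm (f t) * (norm (z * of_real t) ^ i / fact i) \<le> K * ((norm z * R) ^ i / fact i)"
          by (rule mult_mono[OF K(1) h K(2)]) simp
        then show ?thesis unfolding nF using True by simp
      qed (simp add: nF fz)
    qed
    also have "\<dots> \<le> R * K * ((norm z * R) ^ i / fact i)"
      using g by (simp add: measure_lborel_Icc good_def)
    finally show ?thesis .
  qed
  have sm: "summable (\<lambda>i. (\<integral>t. norm (F i t) \<partial>lborel))"
  proof (rule summable_comparison_test)
    show "\<exists>N. \<forall>n\<ge>N. norm (\<integral>t. norm (F n t) \<partial>lborel) \<le> R * K * ((norm z * R) ^ n / fact n)"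
      using bnd by auto
    show "summable (\<lambda>n. R * K * ((norm z * R) ^ n / fact n))"
      by (intro summable_mult) (use summable_exp[of "norm z * R"] in \<open>simp add: divide_inverse mult.commute\<close>)
  qed
  have "(\<lambda>i. integral\<^sup>L lborel (F i)) sums (\<integral>t. (\<Sum>i. F i t) \<partial>lborel)"
    by (rule sums_integral[OF intF _ sm]) (simp add: sumn)
  moreover have "(\<Sum>i. F i t) = f t * exp (z * of_real t)" for t
    using sumt[of t] by (simp add: sums_iff)
  moreover have "integral\<^sup>L lborel (F i) = mom f i * z ^ i / fact i" for i
  proof -
    have "F i = (\<lambda>t. (z ^ i / fact i) * (f t * of_real t ^ i))"
      unfolding F_def by (auto simp: power_mult_distrib)
    then show ?thesis unfolding mom_def by (simp only: integral_mult_right_zero) simp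
  qed
  ultimately show ?thesis by (simp add: Lap_def)
qed

lemma mom_mult_t: "mom (\<lambda>t. of_real t * f t) n = mom f (Suc n)"
  unfolding mom_def by (simp add: mult_ac)

lemma Lap_deriv:
  assumes g: "good R f"
  shows "(Lap f has_field_derivative Lap (\<lambda>t. of_real t * f t) z) (at z)"
proof -
  define c where "c n = mom f n / fact n" for n
  have eq: "Lap f = (\<lambda>z. \<Sum>n. c n * z ^ n)"
    using Lap_sums[OF g] by (auto simp: c_def sums_iff fun_eq_iff)
  have sm: "summable (\<lambda>n. c n * y ^ n)" for y
    using Lap_sums[OF g, of y] by (auto simp: c_def sums_iff)
  have "diffs c n * z ^ n = mom (\<lambda>t. of_real t * f t) n * z ^ n / fact n" for n
  proof -
    have fn: "(fact n :: complex) \<noteq> 0" by simp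
    have "(of_nat (Suc n) :: complex) * (x / fact (Suc n)) = x / fact n" for x
      using fn by (simp only: fact_Suc of_nat_mult) (simp add: divide_simps del: of_nat_Suc)
    then show ?thesis unfolding diffs_def c_def mom_mult_t by simp
  qed
  then have "(\<Sum>n. diffs c n * z ^ n) = Lap (\<lambda>t. of_real t * f t) z"
    using Lap_sums[OF good_mult_t[OF g], of z] by (simp add: sums_iff)
  with termdiffs_strong_converges_everywhere[of c z, OF sm] show ?thesis
    by (simp add: eq)
qed

lemma real_bdd_integrable:
  fixes g :: "real \<Rightarrow> real"
  assumes gm: "g \<in> borel_measurable borel" and K: "\<And>t. \<bar>g t\<bar> \<le> K"
    and gz: "\<And>t. t \<notin> {0..R} \<Longrightarrow> g t = 0"
  shows "integrable lborel g"
proof -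
  have int: "integrable lborel (\<lambda>t. indicator {0..R} t * K)"
    by (intro integrable_mult_left integrable_real_indicator) (simp_all add: emeasure_lborel_Icc_eq)
  show ?thesis
  proof (rule Bochner_Integration.integrable_bound[OF int])
    show "g \<in> borel_measurable lborel" using gm by simp
    show "AE t in lborel. norm (g t) \<le> norm (indicator {0..R} t * K)"
    proof (intro AE_I2)
      fix t show "norm (g t) \<le> norm (indicator {0..R} t * K :: real)"
        using K[of t] gz[of t] by (cases "t \<in> {0..R}") auto
    qed
  qed
qed

lemma real_unique:
  fixes g :: "real \<Rightarrow> real"
  assumes gm[measurable]: "g \<in> borel_measurable borel" and K: "\<And>t. \<bar>g t\<bar> \<le> K"
    and gz: "\<And>t. t \<notin> {0..R} \<Longrightarrow> g t = 0"
    and R0: "0 \<le> R" and L0: "\<And>y. Lap (\<lambda>t. complex_of_real (g t)) (\<i> * complex_of_real y) = 0"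
  shows "AE t in lborel. g t = 0"
proof -
  have K0: "0 \<le> K" using K[of 0] by linarith
  define gp where "gp t = max (g t) 0" for t
  define gn where "gn t = max (- g t) 0" for t
  have [measurable]: "gp \<in> borel_measurable borel" "gn \<in> borel_measurable borel"
    unfolding gp_def gn_def by measurable
  have ip: "integrable lborel gp"
    by (rule real_bdd_integrable[of _ K R]) (use K gz K0 in \<open>auto simp: gp_def abs_le_iff\<close>)
  have in_: "integrable lborel gn"
    by (rule real_bdd_integrable[of _ K R]) (use K gz K0 in \<open>auto simp: gn_def abs_le_iff\<close>)
  have gpn: "g t = gp t - gn t" for t unfolding gp_def gn_def by auto
  have gp0: "0 \<le> gp t" "0 \<le> gn t" for t unfolding gp_def gn_def by auto
  have goodp: "good R (\<lambda>t. complex_of_real (gp t))"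
    unfolding good_def using R0 K gz K0 by (auto simp: gp_def abs_le_iff)
  have goodn: "good R (\<lambda>t. complex_of_real (gn t))"
    unfolding good_def using R0 K gz K0 by (auto simp: gn_def abs_le_iff)
  have charg: "(\<integral>t. complex_of_real (gp t) * exp (\<i> * complex_of_real y * complex_of_real t) \<partial>lborel)
      = (\<integral>t. complex_of_real (gn t) * exp (\<i> * complex_of_real y * complex_of_real t) \<partial>lborel)" for y
  proof -
    have i1: "integrable lborel (\<lambda>t. complex_of_real (gp t) * exp (\<i> * complex_of_real y * complex_of_real t))"
      by (rule good_integrable[OF goodp]) (auto intro!: continuous_intros)
    have i2: "integrable lborel (\<lambda>t. complex_of_real (gn t) * exp (\<i> * complex_of_real y * complex_of_real t))"
      by (rule good_integrable[OF goodn]) (auto intro!: continuous_intros)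
    have "0 = Lap (\<lambda>t. complex_of_real (g t)) (\<i> * complex_of_real y)" using L0 by simp
    also have "\<dots> = (\<integral>t. complex_of_real (gp t) * exp (\<i> * complex_of_real y * complex_of_real t)
             - complex_of_real (gn t) * exp (\<i> * complex_of_real y * complex_of_real t) \<partial>lborel)"
      unfolding Lap_def gpn by (simp add: algebra_simps)
    also have "\<dots> = (\<integral>t. complex_of_real (gp t) * exp (\<i> * complex_of_real y * complex_of_real t) \<partial>lborel)
       - (\<integral>t. complex_of_real (gn t) * exp (\<i> * complex_of_real y * complex_of_real t) \<partial>lborel)"
      by (rule Bochner_Integration.integral_diff[OF i1 i2])
    finally show ?thesis by simp
  qed
  have mm: "(\<integral>t. gp t \<partial>lborel) = (\<integral>t. gn t \<partial>lborel)"
    using charg[of 0] by simp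
  define m where "m = (\<integral>t. gp t \<partial>lborel)"
  have m0: "0 \<le> m" unfolding m_def by (rule integral_nonneg_AE) (auto simp: gp_def)
  show ?thesis
  proof (cases "m = 0")
    case True
    have "AE t in lborel. gp t = 0"
      using True unfolding m_def by (subst (asm) integral_nonneg_eq_0_iff_AE[OF ip]) (auto simp: gp_def)
    moreover have "integral\<^sup>L lborel gn = 0" using True mm m_def by simp
    then have "AE t in lborel. gn t = 0"
      by (subst (asm) integral_nonneg_eq_0_iff_AE[OF in_]) (auto simp: gn_def)
    ultimately show ?thesis by eventually_elim (simp add: gpn)
  next
    case False
    then have mpos: "0 < m" using m0 by simp
    define M1 where "M1 = density lborel (\<lambda>t. ennreal (gp t / m))"
    define M2 where "M2 = density lborel (\<lambda>t. ennreal (gn t / m))"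
    have rd: "real_distribution (density lborel (\<lambda>t. ennreal (h t / m)))"
      if hm[measurable]: "h \<in> borel_measurable borel" and hi: "integrable lborel h"
      and hp: "\<And>t. 0 \<le> h t" and hint: "integral\<^sup>L lborel h = m" for h
    proof -
      have "emeasure (density lborel (\<lambda>t. ennreal (h t / m))) UNIV = (\<integral>\<^sup>+t. ennreal (h t / m) \<partial>lborel)"
        by (simp add: emeasure_density)
      also have "\<dots> = ennreal (\<integral>t. h t / m \<partial>lborel)"
        by (rule nn_integral_eq_integral) (use hi hp mpos in auto)
      also have "\<dots> = 1" using hint mpos by simp
      finally have "prob_space (density lborel (\<lambda>t. ennreal (h t / m)))"
        by (intro prob_spaceI) simp
      then show ?thesis by (intro real_distribution.intro real_distribution_axioms.intro) auto
    qed
    have r1: "real_distribution M1" unfolding M1_def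
      by (rule rd[OF _ ip gp0(1)]) (simp_all add: m_def)
    have r2: "real_distribution M2" unfolding M2_def
      by (rule rd[OF _ in_ gp0(2)]) (simp_all add: m_def mm)
    have ch: "char (density lborel (\<lambda>t. ennreal (h t / m))) y =
        (\<integral>t. complex_of_real (h t) * exp (\<i> * complex_of_real y * complex_of_real t) \<partial>lborel) / m"
      if hm[measurable]: "h \<in> borel_measurable borel" and hp: "\<And>t. 0 \<le> h t" for h y
    proof -
      have "char (density lborel (\<lambda>t. ennreal (h t / m))) y = (\<integral>t. (h t / m) *\<^sub>R iexp (y * t) \<partial>lborel)"
        unfolding char_def by (rule integral_density) (use hp mpos in auto)
      also have "\<dots> = (\<integral>t. complex_of_real (h t) * exp (\<i> * complex_of_real y * complex_of_real t) / m \<partial>lborel)"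
        by (intro Bochner_Integration.integral_cong) (auto simp: scaleR_conv_of_real mult_ac)
      also have "\<dots> = (\<integral>t. complex_of_real (h t) * exp (\<i> * complex_of_real y * complex_of_real t) \<partial>lborel) / m"
        by (rule integral_divide_zero)
      finally show ?thesis .
    qed
    have "char M1 = char M2" unfolding M1_def M2_def
      by (rule ext, subst ch, simp, simp add: gp_def, subst ch, simp, simp add: gn_def, simp add: charg)
    then have "M1 = M2" by (rule Levy_uniqueness[OF r1 r2])
    then have "AE t in lborel. ennreal (gp t / m) = ennreal (gn t / m)" unfolding M1_def M2_def
    proof (subst (asm) finite_density_unique)
      show "(\<integral>\<^sup>+ t. ennreal (gp t / m) \<partial>lborel) \<noteq> \<infinity>"
        using ip gp0 mpos by (subst nn_integral_eq_integral) auto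
    qed auto
    then show ?thesis
    proof eventually_elim
      case (elim t)
      then have "gp t / m = gn t / m" using mpos by (subst (asm) ennreal_inj) (auto simp: gp_def gn_def)
      then have "gp t = gn t" using mpos by simp
      then show ?case unfolding gp_def gn_def by (auto simp: max_def split: if_splits)
    qed
  qed
qed

lemma Lap_lin:
  assumes "good R f" "good R g"
  shows "Lap (\<lambda>t. c * f t + d * g t) z = c * Lap f z + d * Lap g z"
proof -
  have i1: "integrable lborel (\<lambda>t. f t * exp (z * of_real t))"
    by (rule good_integrable[OF assms(1)]) (auto intro!: continuous_intros)
  have i2: "integrable lborel (\<lambda>t. g t * exp (z * of_real t))"
    by (rule good_integrable[OF assms(2)]) (auto intro!: continuous_intros)
  have "Lap (\<lambda>t. c * f t + d * g t) z =
     (\<integral>t. c * (f t * exp (z * of_real t)) + d * (g t * exp (z * of_real t)) \<partial>lborel)"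
    unfolding Lap_def by (simp add: algebra_simps)
  also have "\<dots> = c * Lap f z + d * Lap g z"
    unfolding Lap_def using i1 i2 by (simp add: Bochner_Integration.integral_add)
  finally show ?thesis .
qed

lemma good_cnj: "good R f \<Longrightarrow> good R (\<lambda>t. cnj (f t))"
proof -
  assume g: "good R f"
  then have [measurable]: "f \<in> borel_measurable borel" unfolding good_def by auto
  have "(\<lambda>t. cnj (f t)) \<in> borel_measurable borel"
    by (rule borel_measurable_continuous_on) (auto intro!: continuous_intros)
  then show ?thesis using g unfolding good_def by auto
qed

lemma Lap_cnj: "Lap (\<lambda>t. cnj (f t)) (\<i> * complex_of_real y) = cnj (Lap f (\<i> * complex_of_real (- y)))"
proof -
  have "Lap (\<lambda>t. cnj (f t)) (\<i> * complex_of_real y) = (\<integral>t. cnj (f t * exp (\<i> * complex_of_real (- y) * of_real t)) \<partial>lborel)"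
    unfolding Lap_def by (intro Bochner_Integration.integral_cong) (auto simp: exp_cnj)
  also have "\<dots> = cnj (Lap f (\<i> * complex_of_real (- y)))"
    unfolding Lap_def using Bochner_Integration.integral_cnj[of lborel "\<lambda>t. f t * exp (\<i> * complex_of_real (- y) * of_real t)"] by (simp del: complex_cnj_mult)
  finally show ?thesis .
qed

lemma complex_unique:
  assumes g: "good R f" and L0: "\<And>y. Lap f (\<i> * complex_of_real y) = 0"
  shows "AE t in lborel. f t = 0"
proof -
  obtain K where K: "\<And>t. norm (f t) \<le> K" "0 \<le> K" and fm[measurable]: "f \<in> borel_measurable borel"
    and fz: "\<And>t. t \<notin> {0..R} \<Longrightarrow> f t = 0" using goodD[OF g] by blast
  have R0: "0 \<le> R" using g unfolding good_def by auto
  have Lc: "Lap (\<lambda>t. cnj (f t)) (\<i> * complex_of_real y) = 0" for y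
    using L0[of "-y"] by (simp only: Lap_cnj) simp
  have "AE t in lborel. Re (f t) = 0"
  proof (rule real_unique[of _ K R])
    show "\<bar>Re (f t)\<bar> \<le> K" for t using abs_Re_le_cmod[of "f t"] K(1)[of t] by linarith
    show "Lap (\<lambda>t. complex_of_real (Re (f t))) (\<i> * complex_of_real y) = 0" for y
    proof -
      have "(\<lambda>t. complex_of_real (Re (f t))) = (\<lambda>t. (1/2) * f t + (1/2) * cnj (f t))"
        by (auto simp: fun_eq_iff complex_eq_iff)
      then have "Lap (\<lambda>t. complex_of_real (Re (f t))) (\<i> * complex_of_real y) =
         (1/2) * Lap f (\<i> * complex_of_real y) + (1/2) * Lap (\<lambda>t. cnj (f t)) (\<i> * complex_of_real y)"
        by (simp only: Lap_lin[OF g good_cnj[OF g]])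
      then show ?thesis using L0 Lc by simp
    qed
  qed (use fz R0 in auto)
  moreover have "AE t in lborel. Im (f t) = 0"
  proof (rule real_unique[of _ K R])
    show "\<bar>Im (f t)\<bar> \<le> K" for t using abs_Im_le_cmod[of "f t"] K(1)[of t] by linarith
    show "Lap (\<lambda>t. complex_of_real (Im (f t))) (\<i> * complex_of_real y) = 0" for y
    proof -
      have "(\<lambda>t. complex_of_real (Im (f t))) = (\<lambda>t. (1/(2*\<i>)) * f t + (-1/(2*\<i>)) * cnj (f t))"
        by (auto simp: fun_eq_iff complex_eq_iff)
      then have "Lap (\<lambda>t. complex_of_real (Im (f t))) (\<i> * complex_of_real y) =
         (1/(2*\<i>)) * Lap f (\<i> * complex_of_real y) + (-1/(2*\<i>)) * Lap (\<lambda>t. cnj (f t)) (\<i> * complex_of_real y)"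
        by (simp only: Lap_lin[OF g good_cnj[OF g]])
      then show ?thesis using L0 Lc by simp
    qed
  qed (use fz R0 in auto)
  ultimately show ?thesis by eventually_elim (simp add: complex_eq_iff)
qed

lemma norm_lt_of_re:
  fixes u :: complex and M :: real
  assumes "Re u < M" "0 < M"
  shows "norm u < norm (2 * of_real M - u)"
proof -
  have "norm u ^ 2 < norm (2 * of_real M - u) ^ 2"
    using assms unfolding cmod_power2 by (simp add: power2_eq_square algebra_simps)
  then show ?thesis by (rule power_less_imp_less_base) simp
qed

lemma entire_re_bound_linear_growth:
  fixes G :: "complex \<Rightarrow> complex"
  assumes hol: "G holomorphic_on UNIV" and G0: "G 0 = 0"
    and re: "\<And>z. Re (G z) \<le> c + d * norm z" and c0: "0 \<le> c" and d0: "0 \<le> d"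
  shows "norm (G z) \<le> 2 * c + 2 + 4 * d * norm z"
proof (cases "z = 0")
  case True then show ?thesis using G0 c0 by simp
next
  case False
  define R where "R = 2 * norm z"
  define M where "M = c + d * R + 1"
  have R0: "0 < R" using False by (simp add: R_def)
  have M0: "0 < M" using c0 mult_nonneg_nonneg[OF d0 less_imp_le[OF R0]] by (simp add: M_def)
  define h where "h w = G (of_real R * w) / (2 * of_real M - G (of_real R * w))" for w
  have reb: "Re (G (of_real R * w)) < M" if "norm w < 1" for w
  proof -
    have "Re (G (of_real R * w)) \<le> c + d * norm (of_real R * w)" by (rule re)
    also have "\<dots> \<le> c + d * R" using that R0 d0
      by (auto simp: norm_mult intro!: mult_left_mono mult_le_one)
    finally show ?thesis by (simp add: M_def)
  qed
  have lt: "norm (G (of_real R * w)) < norm (2 * of_real M - G (of_real R * w))" if "norm w < 1" for w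
    by (rule norm_lt_of_re[OF reb[OF that] M0])
  have den: "2 * of_real M - G (of_real R * w) \<noteq> 0" if "norm w < 1" for w
    using lt[OF that] by auto
  have holh: "h holomorphic_on ball 0 1"
    unfolding h_def using den
    by (intro holomorphic_intros holomorphic_on_compose_gen[where g=G, OF _ holomorphic_on_subset[OF hol], unfolded o_def]) auto
  have h0: "h 0 = 0" by (simp add: h_def G0)
  have hlt: "norm (h w) < 1" if "norm w < 1" for w
    unfolding h_def using lt[OF that] den[OF that] by (simp add: norm_divide divide_less_eq)
  define xi where "xi = z / of_real R"
  have nxi: "norm xi = 1/2" using R0 by (simp add: xi_def R_def norm_divide)
  have hxi: "norm (h xi) \<le> 1/2"
    using Schwarz_Lemma(1)[OF holh h0 hlt, of xi] nxi by simp
  have zR: "of_real R * xi = z" using R0 by (simp add: xi_def)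
  define u where "u = G z"
  have hu: "h xi = u / (2 * of_real M - u)" by (simp add: h_def zR u_def)
  have denu: "2 * of_real M - u \<noteq> 0" using den[of xi] nxi zR by (simp add: u_def)
  have "u * (1 + h xi) = 2 * of_real M * h xi"
    using denu unfolding hu by (simp add: field_simps)
  moreover have n1: "norm (1 + h xi) \<ge> 1/2"
    using norm_triangle_ineq2[of 1 "- h xi"] hxi by simp
  ultimately have "norm u * norm (1 + h xi) = 2 * M * norm (h xi)"
    using M0 by (metis norm_mult norm_of_real abs_of_pos norm_numeral mult.assoc)
  also have "\<dots> \<le> 2 * M * (1/2)" using hxi M0 by (intro mult_left_mono) auto
  also have "\<dots> \<le> 2 * M * norm (1 + h xi)" using n1 M0 by (intro mult_left_mono) auto
  finally have "norm u * norm (1 + h xi) \<le> 2 * M * norm (1 + h xi)" .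
  moreover have "0 < norm (1 + h xi)" using n1 by linarith
  ultimately have "norm u \<le> 2 * M" by (rule mult_right_le_imp_le)
  then show ?thesis by (simp add: u_def M_def R_def algebra_simps)
qed

lemma entire_re_bound_affine:
  fixes G :: "complex \<Rightarrow> complex"
  assumes hol: "G holomorphic_on UNIV" and G0: "G 0 = 0"
    and re: "\<And>z. Re (G z) \<le> c + d * norm z" and c0: "0 \<le> c" and d0: "0 \<le> d"
  shows "G z = deriv G 0 * z"
proof -
  have "G z = (\<Sum>k\<le>1. (deriv^^k) G 0 / fact k * z ^ k)"
  proof (rule Liouville_polynomial[OF hol, of 1 "2 * c + 2 + 4 * d"])
    fix w :: complex assume w: "1 \<le> norm w"
    have "norm (G w) \<le> 2 * c + 2 + 4 * d * norm w"
      by (rule entire_re_bound_linear_growth[OF hol G0 re c0 d0])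
    also have "\<dots> \<le> (2 * c + 2) * norm w + 4 * d * norm w"
      using w c0 by (intro add_right_mono) (simp add: mult_le_cancel_left1)
    finally show "norm (G w) \<le> (2 * c + 2 + 4 * d) * norm w ^ 1" by (simp add: algebra_simps)
  qed
  then show ?thesis using G0 by simp
qed

lemma Lap_bound:
  assumes g: "good R f"
  obtains C where "0 < C" "\<And>z. norm (Lap f z) \<le> C * exp (R * norm z)"
proof -
  obtain K where K: "\<And>t. norm (f t) \<le> K" "0 \<le> K" and fm[measurable]: "f \<in> borel_measurable borel"
    and fz: "\<And>t. t \<notin> {0..R} \<Longrightarrow> f t = 0" using goodD[OF g] by blast
  have R0: "0 \<le> R" using g unfolding good_def by auto
  have "norm (Lap f z) \<le> (R * K + 1) * exp (R * norm z)" for z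
  proof -
    have int: "integrable lborel (\<lambda>t. f t * exp (z * of_real t))"
      by (rule good_integrable[OF g]) (auto intro!: continuous_intros)
    have "norm (Lap f z) \<le> (\<integral>t. norm (f t * exp (z * of_real t)) \<partial>lborel)"
      unfolding Lap_def by (rule integral_norm_bound)
    also have "\<dots> \<le> (\<integral>t. indicator {0..R} t * (K * exp (R * norm z)) \<partial>lborel)"
    proof (rule integral_mono)
      show "integrable lborel (\<lambda>t. norm (f t * exp (z * of_real t)))" using int by auto
      show "integrable lborel (\<lambda>t. indicator {0..R} t * (K * exp (R * norm z)) :: real)"
        by (intro integrable_mult_left integrable_real_indicator) (simp_all add: emeasure_lborel_Icc_eq)
      fix t show "norm (f t * exp (z * of_real t)) \<le> indicator {0..R} t * (K * exp (R * norm z))"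
      proof (cases "t \<in> {0..R}")
        case True
        have "norm (exp (z * of_real t)) = exp (Re z * t)" by (simp add: norm_exp)
        also have "\<dots> \<le> exp (R * norm z)"
        proof -
          have "Re z * t \<le> norm z * t" using True by (intro mult_right_mono complex_Re_le_cmod) auto
          also have "\<dots> \<le> norm z * R" using True by (intro mult_left_mono) auto
          finally show ?thesis by (simp add: mult.commute)
        qed
        finally have e: "norm (exp (z * of_real t)) \<le> exp (R * norm z)" .
        have "norm (f t * exp (z * of_real t)) \<le> K * exp (R * norm z)"
          unfolding norm_mult by (rule mult_mono[OF K(1) e K(2) norm_ge_zero])
        then show ?thesis using True by simp
      qed (simp add: fz)
    qed
    also have "\<dots> = R * (K * exp (R * norm z))" using R0 by simp
    also have "\<dots> \<le> (R * K + 1) * exp (R * norm z)" by (simp add: algebra_simps)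
    finally show ?thesis .
  qed
  moreover have "0 < R * K + 1" using mult_nonneg_nonneg[OF R0 K(2)] by linarith
  ultimately show ?thesis using that by blast
qed

lemma Lap_holo: "good R f \<Longrightarrow> Lap f holomorphic_on UNIV"
  using Lap_deriv by (auto simp: holomorphic_on_open)

lemma core:
  assumes ga: "good S a" and gb: "good T b"
    and conv: "\<And>z. Lap (\<lambda>t. of_real t * a t) z = Lap a z * Lap b z"
  shows "(AE t in lborel. a t = 0) \<or> (AE t in lborel. b t = 0)"
proof -
  define A where "A = Lap a"
  define B where "B = Lap b"
  have dA: "(A has_field_derivative A z * B z) (at z)" for z
    using Lap_deriv[OF ga, of z] conv[of z] by (simp add: A_def B_def)
  have dB: "(B has_field_derivative Lap (\<lambda>t. of_real t * b t) z) (at z)" for z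
    using Lap_deriv[OF gb, of z] by (simp add: B_def)
  obtain F where dF: "\<And>z. (F has_field_derivative B z) (at z)"
    using holomorphic_convex_primitive'[of UNIV B] Lap_holo[OF gb] unfolding B_def by auto
  have "\<exists>c. \<forall>z\<in>UNIV. A z * exp (- F z) = c"
  proof (rule has_field_derivative_zero_constant)
    fix z :: complex
    have e: "((\<lambda>z. exp (- F z)) has_field_derivative exp (- F z) * (- B z)) (at z)"
      by (rule DERIV_fun_exp[OF DERIV_minus[OF dF]])
    have "((\<lambda>z. A z * exp (- F z)) has_field_derivative
        (A z * B z) * exp (- F z) + exp (- F z) * (- B z) * A z) (at z)"
      by (rule DERIV_mult[OF dA e])
    then show "((\<lambda>z. A z * exp (- F z)) has_field_derivative 0) (at z within UNIV)"
      by (simp add: algebra_simps)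
  qed simp
  then obtain H0 where H0: "\<And>z. A z * exp (- F z) = H0" by auto
  have AH: "A z = H0 * exp (F z)" for z
    using H0[of z] by (metis exp_minus_inverse mult.assoc mult.right_neutral)
  show ?thesis
  proof (cases "H0 = 0")
    case True
    have "AE t in lborel. a t = 0"
      by (rule complex_unique[OF ga]) (simp add: AH True flip: A_def)
    then show ?thesis ..
  next
    case False
    obtain C where C: "0 < C" "\<And>z. norm (A z) \<le> C * exp (S * norm z)"
      using Lap_bound[OF ga] unfolding A_def by blast
    have S0: "0 \<le> S" using ga unfolding good_def by auto
    define G where "G z = F z - F 0" for z
    define c where "c = max 0 (ln C - ln (norm H0) - Re (F 0))"
    have reF: "Re (F z) \<le> ln C - ln (norm H0) + S * norm z" for z
    proof -
      have "norm H0 * exp (Re (F z)) = norm (A z)" by (simp add: AH norm_mult norm_exp)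
      also have "\<dots> \<le> C * exp (S * norm z)" by (rule C(2))
      finally have "ln (norm H0 * exp (Re (F z))) \<le> ln (C * exp (S * norm z))"
        using False C(1) by (subst ln_le_cancel_iff) auto
      then show ?thesis using False C(1) by (simp add: ln_mult)
    qed
    have reG: "Re (G z) \<le> c + S * norm z" for z
      using reF[of z] unfolding G_def c_def by auto
    have holF: "F holomorphic_on UNIV" using dF by (auto simp: holomorphic_on_open)
    have holG: "G holomorphic_on UNIV"
      unfolding G_def by (intro holomorphic_intros holF)
    have G0: "G 0 = 0" by (simp add: G_def)
    have c0: "0 \<le> c" by (simp add: c_def)
    define q where "q = deriv G 0"
    have Gq: "G z = q * z" for z
      unfolding q_def by (rule entire_re_bound_affine[OF holG G0 reG c0 S0])
    have "((\<lambda>z. F 0 + q * z) has_field_derivative q) (at z)" for z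
      by (auto intro!: derivative_eq_intros)
    moreover have "(\<lambda>z. F 0 + q * z) = F"
    proof
      fix z show "F 0 + q * z = F z" using Gq[of z] unfolding G_def by (simp add: algebra_simps)
    qed
    ultimately have Bq: "B z = q" for z using dF[of z] by (metis DERIV_unique)
    have "Lap (\<lambda>t. of_real t * b t) z = 0" for z
    proof -
      have "B = (\<lambda>_. q)" using Bq by auto
      then have "(B has_field_derivative 0) (at z)" by simp
      then show ?thesis using dB[of z] by (metis DERIV_unique)
    qed
    then have "AE t in lborel. of_real t * b t = 0"
      by (intro complex_unique[OF good_mult_t[OF gb]]) auto
    then have "AE t in lborel. b t = 0"
      using AE_lborel_singleton[of 0] by eventually_elim auto
    then show ?thesis ..
  qed
qed

lemma Lap_conv:
  assumes ga: "good S a" and gb: "good T b"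
  shows "Lap (\<lambda>t. \<integral>u. a u * b (t - u) \<partial>lborel) z = Lap a z * Lap b z"
proof -
  obtain Ka where Ka: "\<And>t. norm (a t) \<le> Ka" "0 \<le> Ka" and am[measurable]: "a \<in> borel_measurable borel"
    and az: "\<And>t. t \<notin> {0..S} \<Longrightarrow> a t = 0" using goodD[OF ga] by blast
  obtain Kb where Kb: "\<And>t. norm (b t) \<le> Kb" "0 \<le> Kb" and bm[measurable]: "b \<in> borel_measurable borel"
    and bz: "\<And>t. t \<notin> {0..T} \<Longrightarrow> b t = 0" using goodD[OF gb] by blast
  have S0: "0 \<le> S" and T0: "0 \<le> T" using ga gb unfolding good_def by auto
  define f where "f u t = a u * b (t - u) * exp (z * of_real t)" for u t
  have fm: "case_prod f \<in> borel_measurable (lborel \<Otimes>\<^sub>M lborel)"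
    unfolding f_def by measurable
  define E where "E = exp (norm z * (S + T))"
  have E0: "0 < E" by (simp add: E_def)
  have fb: "norm (f u t) \<le> indicator ({0..S} \<times> {0..S+T}) (u, t) * (Ka * Kb * E)" for u t
  proof (cases "u \<in> {0..S} \<and> t - u \<in> {0..T}")
    case True
    have "norm (exp (z * of_real t)) = exp (Re z * t)" by (simp add: norm_exp)
    also have "\<dots> \<le> E"
    proof -
      have "Re z * t \<le> norm z * t" using True by (intro mult_right_mono complex_Re_le_cmod) auto
      also have "\<dots> \<le> norm z * (S + T)" using True by (intro mult_left_mono) auto
      finally show ?thesis by (simp add: E_def)
    qed
    finally have e: "norm (exp (z * of_real t)) \<le> E" .
    have "norm (f u t) \<le> Ka * Kb * E" unfolding f_def norm_mult
      by (intro mult_mono Ka Kb e mult_nonneg_nonneg) auto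
    then show ?thesis using True by auto
  next
    case False
    then have "a u = 0 \<or> b (t - u) = 0" using az bz by blast
    then show ?thesis using Ka(2) Kb(2) E0 by (auto simp: f_def)
  qed
  have fint: "integrable (lborel \<Otimes>\<^sub>M lborel) (case_prod f)"
  proof (rule Bochner_Integration.integrable_bound)
    show "integrable (lborel \<Otimes>\<^sub>M lborel) (\<lambda>x. indicator ({0..S} \<times> {0..S+T}) x * (Ka * Kb * E) :: real)"
      by (intro integrable_mult_left integrable_real_indicator)
         (auto simp: lborel.emeasure_pair_measure_Times emeasure_lborel_Icc_eq ennreal_mult_less_top)
    show "case_prod f \<in> borel_measurable (lborel \<Otimes>\<^sub>M lborel)" by (rule fm)
    show "AE x in lborel \<Otimes>\<^sub>M lborel. norm (case_prod f x) \<le> norm (indicator ({0..S} \<times> {0..S+T}) x * (Ka * Kb * E) :: real)"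
      using fb Ka(2) Kb(2) E0 by (auto intro!: AE_I2 simp: abs_mult)
  qed
  have ia: "integrable lborel (\<lambda>u. a u * exp (z * of_real u))"
    by (rule good_integrable[OF ga]) (auto intro!: continuous_intros)
  have ib: "integrable lborel (\<lambda>v. b v * exp (z * of_real v))"
    by (rule good_integrable[OF gb]) (auto intro!: continuous_intros)
  have inner: "(\<integral>t. f u t \<partial>lborel) = a u * exp (z * of_real u) * Lap b z" for u
  proof -
    have "Lap b z = (\<integral>t. b (- u + 1 * t) * exp (z * of_real (- u + 1 * t)) \<partial>lborel)"
      unfolding Lap_def using lborel_integral_real_affine[of 1 "\<lambda>v. b v * exp (z * of_real v)" "-u"] by simp
    also have "\<dots> = (\<integral>t. b (t - u) * exp (z * of_real t) * exp (- (z * of_real u)) \<partial>lborel)"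
      by (intro Bochner_Integration.integral_cong) (auto simp: algebra_simps exp_diff exp_minus field_simps)
    finally have "a u * exp (z * of_real u) * Lap b z =
        a u * exp (z * of_real u) * (\<integral>t. b (t - u) * exp (z * of_real t) * exp (- (z * of_real u)) \<partial>lborel)" by simp
    also have "\<dots> = (\<integral>t. a u * exp (z * of_real u) * (b (t - u) * exp (z * of_real t) * exp (- (z * of_real u))) \<partial>lborel)"
      by (rule integral_mult_right_zero[symmetric])
    also have "\<dots> = (\<integral>t. f u t \<partial>lborel)"
      by (intro Bochner_Integration.integral_cong) (auto simp: f_def exp_minus field_simps)
    finally show ?thesis by simp
  qed
  have inner2: "(\<integral>u. f u t \<partial>lborel) = (\<integral>u. a u * b (t - u) \<partial>lborel) * exp (z * of_real t)" for t
    unfolding f_def by (rule integral_mult_left_zero)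
  have "Lap (\<lambda>t. \<integral>u. a u * b (t - u) \<partial>lborel) z = (\<integral>t. (\<integral>u. f u t \<partial>lborel) \<partial>lborel)"
    unfolding Lap_def inner2 ..
  also have "\<dots> = (\<integral>u. (\<integral>t. f u t \<partial>lborel) \<partial>lborel)"
    by (rule lborel_pair.Fubini_integral[OF fint])
  also have "\<dots> = (\<integral>u. a u * exp (z * of_real u) * Lap b z \<partial>lborel)"
    unfolding inner ..
  also have "\<dots> = Lap a z * Lap b z"
    unfolding Lap_def by (rule integral_mult_left_zero)
  finally show ?thesis .
qed

lemma completion_ex_borel_complex:
  fixes f :: "'a \<Rightarrow> complex"
  assumes f: "f \<in> borel_measurable (completion M)"
  shows "\<exists>g\<in>borel_measurable M. AE x in M. f x = g x"
proof -
  have "(\<lambda>x. Re (f x)) \<in> borel_measurable (completion M)" using f by (simp only: borel_measurable_complex_iff)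
  from completion_ex_borel_measurable_real[OF this] obtain g1 where
    g1: "g1 \<in> borel_measurable M" "AE x in M. Re (f x) = g1 x" by (elim bexE)
  have "(\<lambda>x. Im (f x)) \<in> borel_measurable (completion M)" using f by (simp only: borel_measurable_complex_iff)
  from completion_ex_borel_measurable_real[OF this] obtain g2 where
    g2: "g2 \<in> borel_measurable M" "AE x in M. Im (f x) = g2 x" by (elim bexE)
  have "(\<lambda>x. Complex (g1 x) (g2 x)) \<in> borel_measurable M"
    using g1(1) g2(1) by (subst borel_measurable_complex_iff) simp
  moreover have "AE x in M. f x = Complex (g1 x) (g2 x)"
    using g1(2) g2(2) by eventually_elim (simp add: complex_eq_iff)
  ultimately show ?thesis by (intro bexI[of _ "\<lambda>x. Complex (g1 x) (g2 x)"])
qed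

lemma mk_good:
  fixes f :: "real \<Rightarrow> complex"
  assumes fm: "(\<lambda>x. indicator {0..} x *\<^sub>R f x) \<in> borel_measurable lebesgue"
    and M: "\<forall>t\<ge>0. norm (f t) \<le> M" and fz: "AE t in lborel. t \<ge> 0 \<longrightarrow> t > R \<longrightarrow> f t = 0"
    and R0: "0 \<le> R"
  obtains f' where "good R f'" "AE t in lborel. t \<ge> 0 \<longrightarrow> f t = f' t"
proof -
  obtain f2 where f2m[measurable]: "f2 \<in> borel_measurable lborel"
    and f2: "AE x in lborel. indicator {0..} x *\<^sub>R f x = f2 x"
    using completion_ex_borel_complex[OF fm] by (elim bexE)
  have f2b[measurable]: "f2 \<in> borel_measurable borel" using f2m by simp
  define f' where "f' t = (if t \<in> {0..R} \<and> norm (f2 t) \<le> M then f2 t else 0)" for t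
  have f'm: "f' \<in> borel_measurable borel" unfolding f'_def by measurable
  have f'b: "\<forall>t. norm (f' t) \<le> max M 0" unfolding f'_def by auto
  have f'z: "\<forall>t. t \<notin> {0..R} \<longrightarrow> f' t = 0" unfolding f'_def by auto
  have "good R f'" unfolding good_def using R0 f'm f'b f'z by blast
  moreover have "AE t in lborel. t \<ge> 0 \<longrightarrow> f t = f' t"
    using f2 fz
  proof eventually_elim
    case (elim t)
    show ?case
    proof
      assume t0: "0 \<le> t"
      then have ft: "f t = f2 t" using elim(1) by simp
      show "f t = f' t"
      proof (cases "t \<le> R")
        case True then show ?thesis using M t0 ft by (auto simp: f'_def)
      next
        case False then show ?thesis using elim(2) t0 by (auto simp: f'_def)
      qed
    qed
  qed
  ultimately show ?thesis using that by blast
qed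

lemma key_interval:
  fixes a b a' b' :: "real \<Rightarrow> complex"
  assumes ga: "good S a'" and gb: "good T b'"
    and Aa: "AE t in lborel. t \<ge> 0 \<longrightarrow> a t = a' t"
    and Ab: "AE t in lborel. t \<ge> 0 \<longrightarrow> b t = b' t"
    and t0: "0 < t"
  shows "interval_lebesgue_integral lebesgue 0 (ereal t) (\<lambda>u. a u * b (t - u)) = (\<integral>u. a' u * b' (t - u) \<partial>lborel)"
proof -
  have [measurable]: "a' \<in> borel_measurable borel" "b' \<in> borel_measurable borel"
    using ga gb unfolding good_def by auto
  have a'z: "\<And>u. u < 0 \<Longrightarrow> a' u = 0" and b'z: "\<And>u. u < 0 \<Longrightarrow> b' u = 0"
    using ga gb unfolding good_def by auto
  define g where "g u = indicator {0<..<t} u *\<^sub>R (a u * b (t - u))" for u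
  define k where "k u = a' u * b' (t - u)" for u
  have km: "k \<in> borel_measurable lborel" unfolding k_def by measurable
  from Ab obtain N where N: "{x \<in> space lborel. \<not> (x \<ge> 0 \<longrightarrow> b x = b' x)} \<subseteq> N"
    "emeasure lborel N = 0" "N \<in> sets lborel"
    by (elim AE_E)
  have [measurable]: "N \<in> sets borel" using N(3) by simp
  have "AE v in lborel. v \<notin> N" using N by (intro AE_not_in) (auto simp: null_sets_def)
  then have "AE u in lborel. t + (-1) * u \<notin> N"
    by (intro AE_borel_affine) auto
  moreover note Aa AE_lborel_singleton[of 0] AE_lborel_singleton[of t]
  ultimately have ae: "AE u in lborel. g u = k u"
  proof eventually_elim
    case (elim u)
    have bu: "b (t - u) = b' (t - u)" if tu: "t - u \<ge> 0"
    proof (rule ccontr)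
      assume "b (t - u) \<noteq> b' (t - u)"
      then have "t - u \<in> {x \<in> space lborel. \<not> (x \<ge> 0 \<longrightarrow> b x = b' x)}" using tu by simp
      then have "t - u \<in> N" by (rule subsetD[OF N(1)])
      moreover have "t - u \<notin> N" using elim(1) by simp
      ultimately show False by simp
    qed
    show ?case
    proof (cases "0 < u \<and> u < t")
      case True then show ?thesis using elim(2) bu by (simp add: g_def k_def)
    next
      case False
      then have "u < 0 \<or> t - u < 0" using elim(3,4) by auto
      then show ?thesis using False a'z b'z by (auto simp: g_def k_def)
    qed
  qed
  have kml: "k \<in> borel_measurable lebesgue" using km by (rule measurable_completion)
  have aeL: "AE u in lebesgue. k u = g u" using ae by (simp add: AE_completion_iff eq_commute)
  have gml: "g \<in> borel_measurable lebesgue" by (rule borel_measurable_AE[OF kml aeL])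
  have "interval_lebesgue_integral lebesgue 0 (ereal t) (\<lambda>u. a u * b (t - u)) = integral\<^sup>L lebesgue g"
  proof -
    have "einterval 0 (ereal t) = {0<..<t}" by (auto simp: einterval_def)
    then show ?thesis using t0 unfolding interval_lebesgue_integral_def set_lebesgue_integral_def g_def
      by simp
  qed
  also have "\<dots> = integral\<^sup>L lebesgue k"
    by (rule integral_cong_AE[OF gml kml]) (use aeL in \<open>auto elim: eventually_mono\<close>)
  also have "\<dots> = integral\<^sup>L lborel k" using km by (rule integral_completion)
  finally show ?thesis by (simp add: k_def[abs_def])
qed

theorem corollary2p3:
  fixes a b :: "real \<Rightarrow> complex"
  assumes a_meas: "set_borel_measurable lebesgue {0..} a"
    and b_meas: "set_borel_measurable lebesgue {0..} b"
    and a_bdd: "\<exists>M. \<forall>t\<ge>0. norm (a t) \<le> M"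
    and b_bdd: "\<exists>M. \<forall>t\<ge>0. norm (b t) \<le> M"
    and a_nz: "\<not> (AE t in lebesgue. t \<ge> 0 \<longrightarrow> a t = 0)"
    and b_nz: "\<not> (AE t in lebesgue. t \<ge> 0 \<longrightarrow> b t = 0)"
    and a_supp: "\<exists>T. AE t in lebesgue. t \<ge> 0 \<longrightarrow> t > T \<longrightarrow> a t = 0"
    and conv: "AE t in lebesgue. t > 0 \<longrightarrow>
                 complex_of_real t * a t = interval_lebesgue_integral lebesgue 0 (ereal t) (\<lambda>u. a u * b (t - u))"
  shows "\<not> (\<exists>T>0. AE t in lebesgue. t > T \<longrightarrow> b t = 0)"
proof
  assume "\<exists>T>0. AE t in lebesgue. t > T \<longrightarrow> b t = 0"
  then obtain T where T0: "0 < T" and bT': "AE t in lebesgue. t > T \<longrightarrow> b t = 0" by blast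
  have bT: "AE t in lborel. t \<ge> 0 \<longrightarrow> t > T \<longrightarrow> b t = 0"
    using bT' unfolding AE_completion_iff by (rule eventually_mono) auto
  obtain T1 where aT': "AE t in lebesgue. t \<ge> 0 \<longrightarrow> t > T1 \<longrightarrow> a t = 0" using a_supp by blast
  define S where "S = max T1 0"
  have S0: "0 \<le> S" by (simp add: S_def)
  have aS: "AE t in lborel. t \<ge> 0 \<longrightarrow> t > S \<longrightarrow> a t = 0"
    using aT' unfolding AE_completion_iff by (rule eventually_mono) (auto simp: S_def)
  obtain Ma where Ma: "\<forall>t\<ge>0. norm (a t) \<le> Ma" using a_bdd by blast
  obtain Mb where Mb: "\<forall>t\<ge>0. norm (b t) \<le> Mb" using b_bdd by blast
  obtain a' where ga: "good S a'" and Aa: "AE t in lborel. t \<ge> 0 \<longrightarrow> a t = a' t"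
    using mk_good[OF a_meas[unfolded set_borel_measurable_def] Ma aS S0] by blast
  obtain b' where gb: "good T b'" and Ab: "AE t in lborel. t \<ge> 0 \<longrightarrow> b t = b' t"
    using mk_good[OF b_meas[unfolded set_borel_measurable_def] Mb bT less_imp_le[OF T0]] by blast
  have [measurable]: "a' \<in> borel_measurable borel" "b' \<in> borel_measurable borel"
    using ga gb unfolding good_def by auto
  have a'z: "\<And>u. u < 0 \<Longrightarrow> a' u = 0" and b'z: "\<And>u. u < 0 \<Longrightarrow> b' u = 0"
    using ga gb unfolding good_def by auto
  have cv: "AE t in lborel. t > 0 \<longrightarrow>
      complex_of_real t * a t = interval_lebesgue_integral lebesgue 0 (ereal t) (\<lambda>u. a u * b (t - u))"
    using conv unfolding AE_completion_iff .
  have conv2: "AE t in lborel. complex_of_real t * a' t = (\<integral>u. a' u * b' (t - u) \<partial>lborel)"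
    using cv Aa AE_lborel_singleton[of 0]
  proof eventually_elim
    case (elim t)
    show ?case
    proof (cases "t > 0")
      case True
      then show ?thesis using elim(1,2) key_interval[OF ga gb Aa Ab True] by simp
    next
      case False
      then have tn: "t < 0" using elim(3) by simp
      have "(\<lambda>u. a' u * b' (t - u)) = (\<lambda>u. 0)"
      proof
        fix u show "a' u * b' (t - u) = 0"
          using a'z b'z tn by (cases "u < 0") auto
      qed
      then show ?thesis using a'z[OF tn] by simp
    qed
  qed
  have "Lap (\<lambda>t. of_real t * a' t) z = Lap a' z * Lap b' z" for z
  proof -
    have "Lap (\<lambda>t. of_real t * a' t) z = Lap (\<lambda>t. \<integral>u. a' u * b' (t - u) \<partial>lborel) z"
      unfolding Lap_def
    proof (rule integral_cong_AE)
      show "(\<lambda>t. complex_of_real t * a' t * exp (z * complex_of_real t)) \<in> borel_measurable lborel"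
        by measurable
      show "(\<lambda>t. (\<integral>u. a' u * b' (t - u) \<partial>lborel) * exp (z * complex_of_real t)) \<in> borel_measurable lborel"
        by measurable
      show "AE t in lborel. complex_of_real t * a' t * exp (z * complex_of_real t) =
          (\<integral>u. a' u * b' (t - u) \<partial>lborel) * exp (z * complex_of_real t)"
        using conv2 by eventually_elim simp
    qed
    also have "\<dots> = Lap a' z * Lap b' z" by (rule Lap_conv[OF ga gb])
    finally show ?thesis .
  qed
  then have "(AE t in lborel. a' t = 0) \<or> (AE t in lborel. b' t = 0)" by (rule core[OF ga gb])
  then show False
  proof
    assume "AE t in lborel. a' t = 0"
    with Aa have "AE t in lborel. t \<ge> 0 \<longrightarrow> a t = 0" by eventually_elim auto
    then show False using a_nz unfolding AE_completion_iff by simp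
  next
    assume "AE t in lborel. b' t = 0"
    with Ab have "AE t in lborel. t \<ge> 0 \<longrightarrow> b t = 0" by eventually_elim auto
    then show False using b_nz unfolding AE_completion_iff by simp
  qed
qed

end
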